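(* Let $T:\mathbb{Z}_{\ge 0}\to\mathbb{R}$ satisfy $T(mn) = T(m)T(n) + T(m-1)T(n-1)$ for all integers $m,n\ge 1$, and suppose $T(0)=0$ and $T(1)=1$. Write $c=T(2)$ and $d=T(3)$. Then $c^2+2c-1\neq 0$ and $$d=\frac{3c^3+c}{c^2+2c-1}.$$ Consequently, $T(n)$ for each $n\ge 2$ is uniquely determined by the value of $c$ alone: if $T'$ is another sequence satisfying the same product rule with $T'(0)=0$, $T'(1)=1$ and $T'(2)=c$, then $T'(n)=T(n)$ for all $n\ge 0$. *)

theory Defs
  imports Complex_Main
begin

definition product_rule :: "(nat \<Rightarrow> real) \<Rightarrow> bool" where
  "product_rule T \<longleftrightarrow>
     (\<forall>m n. m \<ge> 1 \<longrightarrow> n \<ge> 1 \<longrightarrow> T (m * n) = T m * T n + T (m - 1) * T (n - 1))"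

end

theory Submission
  imports Defs
begin

lemma pr: "product_rule T \<Longrightarrow> 1 \<le> m \<Longrightarrow> 1 \<le> n \<Longrightarrow> T (m * n) = T m * T n + T (m - 1) * T (n - 1)"
  unfolding product_rule_def by blast

lemma key:
  assumes P: "product_rule T" and h0: "T 0 = 0" and h1: "T 1 = 1"
  shows "T 3 * (T 2 ^ 2 + 2 * T 2 - 1) = 3 * T 2 ^ 3 + T 2"
proof -
  have h4: "T 4 = T 2 * T 2 + 1" using pr[OF P, of 2 2] h1 by simp
  have h6: "T 6 = T 2 * T 3 + T 2" using pr[OF P, of 2 3] h1 by simp
  have h9: "T 9 = T 3 * T 3 + T 2 * T 2" using pr[OF P, of 3 3] by simp
  have h8: "T 8 = T 2 * T 4 + T 3" using pr[OF P, of 2 4] h1 by simp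
  have h12a: "T 12 = T 3 * T 4 + T 2 * T 3" using pr[OF P, of 3 4] by simp
  have h12b: "T 12 = T 2 * T 6 + T 5" using pr[OF P, of 2 6] h1 by simp
  have h18a: "T 18 = T 3 * T 6 + T 2 * T 5" using pr[OF P, of 3 6] by simp
  have h18b: "T 18 = T 2 * T 9 + T 8" using pr[OF P, of 2 9] h1 by simp
  have h5: "T 5 = T 3 + T 2 * T 3 - T 2 * T 2" using h12a h12b h4 h6 by (simp add: algebra_simps)
  have "T 3 * (T 2 * T 3 + T 2) + T 2 * (T 3 + T 2 * T 3 - T 2 * T 2) = T 2 * (T 3 * T 3 + T 2 * T 2) + (T 2 * (T 2 * T 2 + 1) + T 3)"
    using h18a h18b h5 h6 h9 h8 h4 by simp
  then show ?thesis by (simp add: power2_eq_square power3_eq_cube) (simp add: algebra_simps)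
qed

lemma nz:
  assumes P: "product_rule T" and h0: "T 0 = 0" and h1: "T 1 = 1"
  shows "T 2 ^ 2 + 2 * T 2 - 1 \<noteq> 0"
proof
  assume a: "T 2 ^ 2 + 2 * T 2 - 1 = 0"
  then have "3 * T 2 ^ 3 + T 2 = 0" using key[OF P h0 h1] by simp
  then have "T 2 * (3 * T 2 ^ 2 + 1) = 0" by (simp add: algebra_simps power2_eq_square power3_eq_cube)
  moreover have "3 * T 2 ^ 2 + 1 \<noteq> 0" by (smt (verit) zero_le_power2)
  ultimately have "T 2 = 0" by simp
  with a show False by simp
qed

lemma evenrec:
  assumes P: "product_rule T" and h1: "T 1 = 1" and k: "1 \<le> k"
  shows "T (2 * k) = T 2 * T k + T (k - 1)"
  using pr[OF P, of 2 k] h1 k by simp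

lemma oddrec:
  assumes P: "product_rule T" and h1: "T 1 = 1" and k: "1 \<le> k"
  shows "T (2 * k - 1) = T 4 * T k + T 3 * T (k - 1) - T 2 * (T 2 * T k + T (k - 1))"
proof -
  have a: "T (4 * k) = T 4 * T k + T 3 * T (k - 1)" using pr[OF P, of 4 k] k by simp
  have b: "T (2 * (2 * k)) = T 2 * T (2 * k) + T (2 * k - 1)" using pr[OF P, of 2 "2*k"] k h1 by simp
  have "4 * k = 2 * (2 * k)" by simp
  then show ?thesis using a b evenrec[OF P h1 k] by simp
qed

theorem lemma10:
  fixes T :: "nat \<Rightarrow> real" and c d :: real
  assumes "product_rule T" and "T 0 = 0" and "T 1 = 1"
    and "c = T 2" and "d = T 3"
  shows "c ^ 2 + 2 * c - 1 \<noteq> 0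
    \<and> d = (3 * c ^ 3 + c) / (c ^ 2 + 2 * c - 1)
    \<and> (\<forall>T' :: nat \<Rightarrow> real. product_rule T' \<and> T' 0 = 0 \<and> T' 1 = 1 \<and> T' 2 = c
           \<longrightarrow> (\<forall>n. T' n = T n))"
proof (intro conjI allI impI)
  show nzc: "c ^ 2 + 2 * c - 1 \<noteq> 0" using nz[OF assms(1-3)] assms(4) by simp
  show "d = (3 * c ^ 3 + c) / (c ^ 2 + 2 * c - 1)"
    using key[OF assms(1-3)] assms(4,5) nzc by (metis nonzero_mult_div_cancel_right)
  fix T' :: "nat \<Rightarrow> real" and n
  assume H: "product_rule T' \<and> T' 0 = 0 \<and> T' 1 = 1 \<and> T' 2 = c"
  then have P': "product_rule T'" and z': "T' 0 = 0" and o': "T' 1 = 1" and t2: "T' 2 = T 2"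
    using assms(4) by auto
  have t3: "T' 3 = T 3"
  proof -
    have "T' 3 * (T 2 ^ 2 + 2 * T 2 - 1) = T 3 * (T 2 ^ 2 + 2 * T 2 - 1)"
      using key[OF P' z' o'] key[OF assms(1-3)] t2 by simp
    then show ?thesis using nz[OF assms(1-3)] by simp
  qed
  have t4: "T' 4 = T 4"
    using pr[OF P', of 2 2] pr[OF assms(1), of 2 2] o' assms(3) t2 by simp
  show "T' n = T n"
  proof (induction n rule: less_induct)
    case (less n)
    show ?case
    proof (cases "n \<le> 3")
      case True
      then have "n = 0 \<or> n = 1 \<or> n = 2 \<or> n = 3" by auto
      then show ?thesis using z' o' t2 t3 assms(2,3) by auto
    next
      case False
      show ?thesis
      proof (cases "even n")
        case True
        then obtain k where n: "n = 2 * k" by blast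
        with False have k: "1 \<le> k" "k < n" "k - 1 < n" by auto
        show ?thesis using evenrec[OF P' o' k(1)] evenrec[OF assms(1,3) k(1)] less.IH[OF k(2)]
            less.IH[OF k(3)] t2 n by simp
      next
        case odd: False
        define k where "k = (n + 1) div 2"
        have n: "n = 2 * k - 1" "1 \<le> k" using odd False unfolding k_def by presburger+
        with False have k: "k < n" "k - 1 < n" by auto
        show ?thesis using oddrec[OF P' o' n(2)] oddrec[OF assms(1,3) n(2)] less.IH[OF k(1)]
            less.IH[OF k(2)] t2 t3 t4 n(1) by simp
      qed
    qed
  qed
qed

end
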